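(* Let $d\ge1$, let $\{1,\dots,d\}$ be partitioned into $\mathcal{D}$ and $\mathcal{U}$, let $\mu\in\mathbb{R}^d$, $s>0$, $\Sigma=s^2I$, $\alpha>0$, $\delta\in(0,1/2]$, $p_\delta=\Phi^{-1}(\delta)$ and $\beta\in(0,1)$. Suppose $$\|\mu_{\mathcal{D}}\|_2\ \ge\ \frac{\beta}{\sqrt{1-\beta^2}}\,\|\mu_{\mathcal{U}}\|_2 .$$ Then, if the problem $$\min_{e\in\mathbb{R}^d}\ \|e\|_2\quad\text{s.t.}\quad \alpha-\mu^\top e-p_\delta\|\Sigma^{1/2}e\|_2\le0$$ is feasible, its optimal solution (the agent's best response with $\ell_2$ cost) is a $\beta$-desirable effort profile.
   Context: $\Phi$ is the standard normal CDF. The constraint is equivalent to $\mathbb{P}_{Z\sim\mathcal{N}(\mu,\Sigma)}[Z^\top e\ge\alpha]\ge1-\delta$, where $Z$ is the agent's Gaussian belief about the vector $\mathbb{C}h$ of total feature contributions, here with all features having the same variance and no correlations. $\mathcal{D}$ is the set of desirable features and $\mathcal{U}$ the undesirable ones; $v_{\mathcal{D}}$ denotes the restriction of a vector $v$ to coordinates in $\mathcal{D}$. An effort profile $e$ is $\beta$-desirable if $\|e_{\mathcal{D}}\|_2\ge\beta\|e\|_2$. *)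

theory Defs
  imports "HOL-Analysis.Analysis" "HOL-Probability.Probability"
begin

definition Phi :: "real \<Rightarrow> real" where
  "Phi x = measure (density lborel std_normal_density) {..x}"

text \<open>Its inverse (quantile function); Phi is a strictly increasing bijection onto (0,1).\<close>
definition Phi_inv :: "real \<Rightarrow> real" where
  "Phi_inv q = (THE p. Phi p = q)"

definition restrict_vec :: "'n set \<Rightarrow> real ^ 'n \<Rightarrow> real ^ 'n" where
  "restrict_vec D v = (\<chi> i. if i \<in> D then v $ i else 0)"

definition beta_desirable :: "'n set \<Rightarrow> real \<Rightarrow> real ^ 'n \<Rightarrow> bool" where
  "beta_desirable D \<beta> e \<longleftrightarrow> norm (restrict_vec D e) \<ge> \<beta> * norm e"

end

theory Submission
  imports Defs
begin


abbreviation "NM \<equiv> density lborel std_normal_density"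

lemma NM_rd: "real_distribution NM"
  unfolding real_distribution_def real_distribution_axioms_def
  using prob_space_normal_density by simp

lemma Phi_cdf: "Phi x = cdf NM x"
  by (simp add: Phi_def cdf_def)

lemma NM_atom: "measure NM {x} = 0"
proof -
  have "emeasure NM {x} = 0"
    by (subst emeasure_density) (auto intro!: nn_integral_null_set)
  then show ?thesis by (simp add: measure_def)
qed

lemma Phi_cont: "isCont Phi x"
proof -
  interpret real_distribution NM by (rule NM_rd)
  have "isCont (cdf NM) x" using isCont_cdf NM_atom by simp
  moreover have "Phi = cdf NM" using Phi_cdf by auto
  ultimately show ?thesis by simp
qed

lemma Phi_strict: assumes "x < y" shows "Phi x < Phi y"
proof -
  interpret real_distribution NM by (rule NM_rd)
  define c where "c = (1 / sqrt (2 * pi)) * exp (- (x\<^sup>2 + y\<^sup>2) / 2)"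
  have cpos: "c > 0" unfolding c_def by simp
  have lb: "c \<le> std_normal_density z" if "x < z" "z \<le> y" for z
  proof -
    have "z\<^sup>2 \<le> x\<^sup>2 + y\<^sup>2"
    proof -
      have "\<bar>z\<bar> \<le> max \<bar>x\<bar> \<bar>y\<bar>" using that by auto
      then have "z\<^sup>2 \<le> (max \<bar>x\<bar> \<bar>y\<bar>)\<^sup>2"
      proof -
        have "\<bar>z\<bar>\<^sup>2 \<le> (max \<bar>x\<bar> \<bar>y\<bar>)\<^sup>2" by (rule power_mono) (use \<open>\<bar>z\<bar> \<le> max \<bar>x\<bar> \<bar>y\<bar>\<close> in auto)
        then show ?thesis by simp
      qed
      also have "\<dots> \<le> x\<^sup>2 + y\<^sup>2" by (simp add: max_def)
      finally show ?thesis .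
    qed
    then have "exp (- (x\<^sup>2 + y\<^sup>2) / 2) \<le> exp (- z\<^sup>2 / 2)" by simp
    then show ?thesis unfolding c_def std_normal_density_def
      by (rule mult_left_mono) simp
  qed
  have "emeasure NM {x<..y} = (\<integral>\<^sup>+ z. ennreal (std_normal_density z) * indicator {x<..y} z \<partial>lborel)"
    by (subst emeasure_density) auto
  also have "\<dots> \<ge> (\<integral>\<^sup>+ z. ennreal c * indicator {x<..y} z \<partial>lborel)"
    by (intro nn_integral_mono) (auto simp: indicator_def lb)
  ultimately have "emeasure NM {x<..y} \<ge> ennreal c * ennreal (y - x)"
    using assms by (simp add: nn_integral_cmult)
  then have "ennreal (c * (y - x)) \<le> ennreal (measure NM {x<..y})"
    using assms cpos by (simp add: emeasure_eq_measure ennreal_mult)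
  then have "measure NM {x<..y} \<ge> c * (y - x)"
    by (simp add: ennreal_le_iff)
  moreover have "c * (y - x) > 0" using cpos assms by simp
  moreover have "cdf NM y - cdf NM x = measure NM {x<..y}" using cdf_diff_eq assms by simp
  ultimately show ?thesis using Phi_cdf by simp
qed

lemma Phi_zero: "Phi 0 = 1/2"
proof -
  interpret real_distribution NM by (rule NM_rd)
  have sym: "emeasure NM {..0} = emeasure NM {0..}"
  proof -
    have "emeasure NM {..0} = (\<integral>\<^sup>+ z. ennreal (std_normal_density z) * indicator {..0} z \<partial>lborel)"
      by (subst emeasure_density) auto
    also have "\<dots> = ennreal \<bar>-1\<bar> * (\<integral>\<^sup>+ z. ennreal (std_normal_density (0 + -1 * z)) * indicator {..0} (0 + -1 * z) \<partial>lborel)"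
      by (rule nn_integral_real_affine) auto
    also have "\<dots> = (\<integral>\<^sup>+ z. ennreal (std_normal_density z) * indicator {0..} z \<partial>lborel)"
      by (simp, intro nn_integral_cong) (auto simp: indicator_def std_normal_density_def)
    also have "\<dots> = emeasure NM {0..}"
      by (subst emeasure_density) auto
    finally show ?thesis .
  qed
  have "measure NM {..0} = measure NM {0..}" using sym by (simp add: measure_def)
  moreover have "measure NM {0..} = measure NM {0<..}"
  proof -
    have "{0..} = {0<..} \<union> {0::real}" by auto
    moreover have "measure NM ({0<..} \<union> {0}) = measure NM {0<..} + measure NM {0}"
      by (rule measure_Union) auto
    ultimately have "measure NM {0..} = measure NM {0<..} + measure NM {0}"
      by simp
    then show ?thesis using NM_atom by simp
  qed
  moreover have "measure NM {..0} + measure NM {0<..} = 1"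
  proof -
    have "measure NM ({..0} \<union> {0<..}) = measure NM {..0} + measure NM {0<..}"
      by (rule measure_Union) auto
    moreover have "{..0} \<union> {0<..} = (UNIV::real set)" by auto
    ultimately show ?thesis using prob_space by simp
  qed
  ultimately show ?thesis unfolding Phi_def by simp
qed

lemma Phi_inv_nonpos: assumes "0 < d" "d \<le> 1/2" shows "Phi_inv d \<le> 0"
proof -
  interpret real_distribution NM by (rule NM_rd)
  have "(Phi \<longlongrightarrow> 0) at_bot" using cdf_lim_at_bot Phi_cdf by (metis ext)
  then have "eventually (\<lambda>x. Phi x < d) at_bot" using assms by (simp add: order_tendstoD)
  then obtain a0 where a0: "\<And>x. x \<le> a0 \<Longrightarrow> Phi x < d" by (auto simp: eventually_at_bot_linorder)
  define a where "a = min a0 0"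
  have "Phi a \<le> d" "a \<le> 0" using a0[of a] by (auto simp: a_def)
  then obtain p where p: "Phi p = d" "p \<le> 0"
    using IVT[of Phi a d 0] Phi_cont Phi_zero assms by auto
  have "Phi_inv d = p"
    unfolding Phi_inv_def
  proof (rule the_equality)
    fix q assume "Phi q = d" then show "q = p" using Phi_strict p
      by (metis linorder_neqE_linordered_idom less_irrefl)
  qed (rule p)
  then show ?thesis using p by simp
qed


lemma mat_smult: "mat s *v (e::real^'n::finite) = s *\<^sub>R e"
proof -
  have "(mat s *v e) $ i = s * e $ i" for i
  proof -
    have "(mat s *v e) $ i = (\<Sum>j\<in>UNIV. (if i = j then s else 0) * e $ j)"
      by (simp add: matrix_vector_mult_def mat_def)
    also have "\<dots> = (\<Sum>j\<in>UNIV. if i = j then s * e $ j else 0)"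
      by (intro sum.cong) auto
    also have "\<dots> = s * e $ i" by (simp add: sum.delta)
    finally show ?thesis .
  qed
  then show ?thesis by (simp add: vec_eq_iff)
qed

lemma restrict_split:
  assumes "D \<inter> U = {}" "D \<union> U = UNIV"
  shows "norm (\<mu>::real^'n::finite)^2 = norm (restrict_vec D \<mu>)^2 + norm (restrict_vec U \<mu>)^2"
proof -
  have sum: "\<mu> = restrict_vec D \<mu> + restrict_vec U \<mu>"
    using assms by (auto simp: vec_eq_iff restrict_vec_def)
  have orth: "restrict_vec D \<mu> \<bullet> restrict_vec U \<mu> = 0"
    using assms by (auto simp: inner_vec_def restrict_vec_def intro!: sum.neutral)
  have "norm \<mu>^2 = norm (restrict_vec D \<mu> + restrict_vec U \<mu>)^2" using sum by metis
  also have "\<dots> = norm (restrict_vec D \<mu>)^2 + norm (restrict_vec U \<mu>)^2"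
    by (rule norm_add_Pythagorean) (simp add: orthogonal_def orth)
  finally show ?thesis .
qed

lemma restrict_scale: "restrict_vec D (k *\<^sub>R v) = k *\<^sub>R restrict_vec D v"
  by (auto simp: vec_eq_iff restrict_vec_def)

lemma t1: "norm (\<mu>::real^'n) > 0 \<Longrightarrow> norm \<mu> *\<^sub>R e = r *\<^sub>R \<mu> \<Longrightarrow> e = (r / norm \<mu>) *\<^sub>R \<mu>"
proof -
  assume m: "norm \<mu> > 0" and h: "norm \<mu> *\<^sub>R e = r *\<^sub>R \<mu>"
  have "e = (1 / norm \<mu>) *\<^sub>R (norm \<mu> *\<^sub>R e)" using m by simp
  also have "\<dots> = (r / norm \<mu>) *\<^sub>R \<mu>" using h by simp
  finally show ?thesis .
qed
lemma t2: "0 < (\<beta>::real) \<Longrightarrow> \<beta> < 1 \<Longrightarrow> sqrt (1 - \<beta>^2) > 0"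
proof -
  assume "0 < \<beta>" "\<beta> < 1"
  then have "\<beta>^2 < 1" by (simp add: power_less_one_iff)
  then show ?thesis by simp
qed
lemma t3: assumes "0 < (\<beta>::real)" "\<beta> < 1" "a \<ge> 0" "b \<ge> 0" "a \<ge> \<beta> / sqrt (1 - \<beta>^2) * b" "n^2 = a^2 + b^2" "n \<ge> 0"
  shows "\<beta> * n \<le> a"
proof -
  have sq: "sqrt (1 - \<beta>^2) > 0" using t2 assms by blast
  have "\<beta> * b \<le> sqrt (1 - \<beta>^2) * a" using assms(5) sq
    by (simp add: field_simps)
  then have "(\<beta> * b)^2 \<le> (sqrt (1 - \<beta>^2) * a)^2"
    using assms by (intro power_mono) auto
  moreover have "(sqrt (1 - \<beta>^2))^2 = 1 - \<beta>^2" using sq by (simp add: less_imp_le)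
  ultimately have "\<beta>^2 * b^2 \<le> (1 - \<beta>^2) * a^2"
    by (simp add: power_mult_distrib)
  then have "(\<beta> * n)^2 \<le> a^2" using assms(6) by (simp add: power_mult_distrib algebra_simps)
  then show ?thesis using assms by (simp add: power2_le_iff_abs_le)
qed

theorem corollary2:
  fixes D U :: "'n::finite set" and \<mu> :: "real ^ 'n" and s \<alpha> \<delta> \<beta> :: real
  assumes partition: "D \<inter> U = {}" "D \<union> U = UNIV"
    and s_pos: "s > 0"
    and alpha_pos: "\<alpha> > 0"
    and delta: "0 < \<delta>" "\<delta> \<le> 1/2"
    and beta: "0 < \<beta>" "\<beta> < 1"
    and mu_cond: "norm (restrict_vec D \<mu>) \<ge> \<beta> / sqrt (1 - \<beta>^2) * norm (restrict_vec U \<mu>)"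
    and feasible: "\<exists>e :: real ^ 'n.
          \<alpha> - \<mu> \<bullet> e - Phi_inv \<delta> * norm (mat s *v e) \<le> 0"
    and optimal: "\<alpha> - \<mu> \<bullet> e\<^sub>0 - Phi_inv \<delta> * norm (mat s *v e\<^sub>0) \<le> 0"
                 "\<forall>e :: real ^ 'n. \<alpha> - \<mu> \<bullet> e - Phi_inv \<delta> * norm (mat s *v e) \<le> 0
                      \<longrightarrow> norm e\<^sub>0 \<le> norm e"
  shows "beta_desirable D \<beta> e\<^sub>0"
proof -
  define c where "c = - Phi_inv \<delta> * s"
  have c0: "c \<ge> 0" using Phi_inv_nonpos[OF delta] s_pos unfolding c_def
    by (simp add: mult_nonpos_nonneg)
  have cons: "\<alpha> - \<mu> \<bullet> e - Phi_inv \<delta> * norm (mat s *v e) \<le> 0 \<longleftrightarrow> \<alpha> + c * norm e \<le> \<mu> \<bullet> e" for e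
    using s_pos by (simp add: mat_smult c_def algebra_simps)
  define r where "r = norm e\<^sub>0"
  have f0: "\<alpha> + c * r \<le> \<mu> \<bullet> e\<^sub>0" using optimal(1) cons r_def by simp
  have cs: "\<mu> \<bullet> e\<^sub>0 \<le> norm \<mu> * r" unfolding r_def by (rule norm_cauchy_schwarz)
  have rpos: "r > 0"
  proof (rule ccontr)
    assume "\<not> r > 0" then have "r = 0" unfolding r_def by simp
    then show False using f0 cs alpha_pos c0 by simp
  qed
  have lb: "\<alpha> \<le> (norm \<mu> - c) * r" using f0 cs by (simp add: algebra_simps)
  have mc: "norm \<mu> - c > 0"
  proof (rule ccontr)
    assume "\<not> norm \<mu> - c > 0"
    then have "(norm \<mu> - c) * r \<le> 0" using rpos by (simp add: mult_nonpos_nonneg)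
    then show False using lb alpha_pos by simp
  qed
  have mupos: "norm \<mu> > 0" using c0 mc by linarith
  define rs where "rs = \<alpha> / (norm \<mu> - c)"
  define es where "es = (rs / norm \<mu>) *\<^sub>R \<mu>"
  have nes: "norm es = rs" unfolding es_def rs_def using mc mupos alpha_pos by simp
  have "\<mu> \<bullet> es = rs * norm \<mu>" unfolding es_def using mupos
    by (simp add: power2_norm_eq_inner[symmetric] power2_eq_square)
  then have "\<alpha> + c * norm es \<le> \<mu> \<bullet> es" unfolding nes rs_def using mc
    by (simp add: field_simps)
  then have "r \<le> rs" using optimal(2) cons nes r_def by auto
  moreover have "rs \<le> r" using lb mc unfolding rs_def by (simp add: pos_divide_le_eq mult.commute)
  ultimately have req: "r = rs" by simp
  have "\<alpha> + c * r = norm \<mu> * r" using req mc unfolding rs_def by (simp add: field_simps)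
  then have "\<mu> \<bullet> e\<^sub>0 = norm \<mu> * norm e\<^sub>0" using f0 cs r_def by simp
  then have "norm \<mu> *\<^sub>R e\<^sub>0 = norm e\<^sub>0 *\<^sub>R \<mu>" using norm_cauchy_schwarz_eq[of \<mu> e\<^sub>0] by simp
  then have "norm \<mu> *\<^sub>R e\<^sub>0 = r *\<^sub>R \<mu>" using r_def by simp
  then have e0: "e\<^sub>0 = (r / norm \<mu>) *\<^sub>R \<mu>" by (rule t1[OF mupos])
  define a where "a = norm (restrict_vec D \<mu>)"
  define b where "b = norm (restrict_vec U \<mu>)"
  have ab: "norm \<mu>^2 = a^2 + b^2" unfolding a_def b_def by (rule restrict_split[OF partition])
  have amu: "\<beta> * norm \<mu> \<le> a"
    unfolding a_def by (rule t3[OF beta norm_ge_zero norm_ge_zero mu_cond ab[unfolded a_def b_def] norm_ge_zero])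
  define k where "k = r / norm \<mu>"
  have kpos: "k > 0" using rpos mupos k_def by simp
  have "norm (restrict_vec D e\<^sub>0) = k * a"
    unfolding e0 restrict_scale a_def k_def[symmetric] using kpos by simp
  moreover have "norm e\<^sub>0 = k * norm \<mu>" unfolding e0 k_def[symmetric] using kpos by simp
  moreover have "\<beta> * (k * norm \<mu>) \<le> k * a" using amu kpos
    by (metis mult.left_commute mult_left_mono less_imp_le)
  ultimately show ?thesis unfolding beta_desirable_def by simp
qed

end
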